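(* Let $C$ be a closed cone with nonempty interior in a real Banach space and let $f:\operatorname{int} C \to \operatorname{int} C$ be subhomogeneous and type K order-preserving. For $\epsilon > 0$ let $f_\epsilon := f - \epsilon\, \mathrm{id}$. Then for any $x, y \in \operatorname{int} C$ there exists $\epsilon > 0$ small enough that $f_\epsilon(x), f_\epsilon(y) \in \operatorname{int} C$ and $$d_T(f_\epsilon(x), f_\epsilon(y)) \le d_T(x,y).$$
   Context: A closed cone is a closed convex set $C \subset X$ with $\lambda C \subset C$ for all $\lambda \ge 0$ and $C \cap (-C) = \{0\}$; $x \le y$ means $y - x \in C$. A map $f$ is subhomogeneous if $f(tx) \le t f(x)$ for all $t \ge 1$; it is type K order-preserving if for any $x \le y$ in its domain there exists $\epsilon > 0$ with $f(y) - f(x) \ge \epsilon (y - x)$. For $x, y \in C$, $M(x/y) := \inf\{\beta > 0 : x \le \beta y\}$. For $x,y\in\operatorname{int} C$, Thompson's metric is $d_T(x,y) := \max\{\log M(x/y), \log M(y/x)\}$. *)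

theory Defs
  imports "HOL-Analysis.Analysis"
begin

definition closed_cone :: "'a::real_normed_vector set \<Rightarrow> bool" where
  "closed_cone C \<longleftrightarrow> closed C \<and> convex C \<and> (\<forall>l::real. l \<ge> 0 \<longrightarrow> (\<forall>x\<in>C. l *\<^sub>R x \<in> C))
     \<and> C \<inter> uminus ` C = {0}"

definition cone_le :: "'a::real_vector set \<Rightarrow> 'a \<Rightarrow> 'a \<Rightarrow> bool" where
  "cone_le C x y \<longleftrightarrow> y - x \<in> C"

definition subhomogeneous_on :: "'a::real_vector set \<Rightarrow> 'a set \<Rightarrow> ('a \<Rightarrow> 'a) \<Rightarrow> bool" where
  "subhomogeneous_on C D f \<longleftrightarrow>
     (\<forall>x\<in>D. \<forall>t::real. t \<ge> 1 \<longrightarrow> t *\<^sub>R x \<in> D \<longrightarrow> cone_le C (f (t *\<^sub>R x)) (t *\<^sub>R f x))"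

definition typeK_order_preserving_on :: "'a::real_vector set \<Rightarrow> 'a set \<Rightarrow> ('a \<Rightarrow> 'a) \<Rightarrow> bool" where
  "typeK_order_preserving_on C D f \<longleftrightarrow>
     (\<forall>x\<in>D. \<forall>y\<in>D. cone_le C x y \<longrightarrow>
        (\<exists>\<epsilon>>0. cone_le C (\<epsilon> *\<^sub>R (y - x)) (f y - f x)))"

definition M_cone :: "'a::real_vector set \<Rightarrow> 'a \<Rightarrow> 'a \<Rightarrow> real" where
  "M_cone C x y = Inf {\<beta>::real. \<beta> > 0 \<and> cone_le C x (\<beta> *\<^sub>R y)}"

definition thompson_dist :: "'a::real_vector set \<Rightarrow> 'a \<Rightarrow> 'a \<Rightarrow> real" where
  "thompson_dist C x y = max (ln (M_cone C x y)) (ln (M_cone C y x))"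

end

theory Submission
  imports Defs
begin

lemma pos_aux: "(r::real) > 0 \<Longrightarrow> (n::real) \<ge> 0 \<Longrightarrow> 0 < r / (2 * (n + 1))"
  by (simp add: divide_pos_pos)
lemma lt_aux: assumes "(r::real) > 0" "(n::real) \<ge> 0" shows "r * n / (2 * (n + 1)) < r"
proof -
  have "r * n / (2 * (n + 1)) = r * (n / (2 * (n + 1)))" by simp
  also have "n / (2 * (n + 1)) < 1" using assms by (simp add: divide_less_eq)
  then have "r * (n / (2 * (n + 1))) < r * 1" using assms(1) by (intro mult_strict_left_mono)
  finally show ?thesis by simp
qed

lemma cone_add:
  assumes "closed_cone C" "a \<in> C" "b \<in> C" shows "a + b \<in> C"
proof -
  have cv: "convex C" and sc: "\<forall>l::real. l \<ge> 0 \<longrightarrow> (\<forall>x\<in>C. l *\<^sub>R x \<in> C)"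
    using assms(1) unfolding closed_cone_def by auto
  have "(1/2::real) *\<^sub>R a + (1/2::real) *\<^sub>R b \<in> C"
    using convexD[OF cv assms(2,3)] by auto
  then have "(2::real) *\<^sub>R ((1/2::real) *\<^sub>R a + (1/2::real) *\<^sub>R b) \<in> C" using sc by auto
  then show ?thesis by (simp add: scaleR_add_right)
qed

lemma cone_scale:
  assumes "closed_cone C" "t \<ge> 0" "a \<in> C" shows "t *\<^sub>R a \<in> C"
  using assms unfolding closed_cone_def by auto

lemma cone_pointed:
  assumes "closed_cone C" "a \<in> C" "- a \<in> C" shows "a = 0"
proof -
  have "a \<in> uminus ` C" using assms(3) by (metis image_eqI minus_minus)
  then show ?thesis using assms unfolding closed_cone_def by blast
qed

lemma int_scale:
  assumes "closed_cone C" "t > 0" "z \<in> interior C" shows "t *\<^sub>R z \<in> interior C"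
proof -
  have "(*\<^sub>R) t ` interior C \<subseteq> interior C"
  proof (rule interior_maximal)
    show "(*\<^sub>R) t ` interior C \<subseteq> C"
    proof
      fix p assume "p \<in> (*\<^sub>R) t ` interior C"
      then obtain q where q: "q \<in> interior C" "p = t *\<^sub>R q" by blast
      have "q \<in> C" using q(1) interior_subset by blast
      then have "t *\<^sub>R q \<in> C" using cone_scale[OF assms(1)] assms(2) by simp
      then show "p \<in> C" using q(2) by simp
    qed
    show "open ((*\<^sub>R) t ` interior C)" using open_scaling assms(2) by auto
  qed
  then show ?thesis using assms(3) by auto
qed

lemma M_exists:
  assumes "closed_cone C" "v \<in> interior C" shows "\<exists>t>0. t *\<^sub>R v - u \<in> C"
proof -
  obtain r where r: "r > 0" "ball v r \<subseteq> C" using assms(2) mem_interior by blast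
  define t where "t = 2 * (norm u + 1) / r"
  have t: "t > 0" unfolding t_def using r by (intro divide_pos_pos) (smt (verit) norm_ge_zero)+
  have "norm ((1/t) *\<^sub>R u) = r * norm u / (2 * (norm u + 1))"
    using t r unfolding t_def by (simp add: field_simps)
  also have "\<dots> < r" using r by (intro lt_aux) auto
  finally have "v - (1/t) *\<^sub>R u \<in> ball v r" by (simp add: dist_norm)
  then have vC: "v - (1/t) *\<^sub>R u \<in> C" using r by blast
  have m: "t *\<^sub>R (v - (1/t) *\<^sub>R u) \<in> C" using t cone_scale[OF assms(1) _ vC, of t] by linarith
  have "t *\<^sub>R (v - (1/t) *\<^sub>R u) = t *\<^sub>R v - u" using t by (simp add: scaleR_diff_right)
  then show ?thesis using t m by metis
qed

lemma M_attained:
  assumes cc: "closed_cone C" and u: "u \<in> C" "u \<noteq> 0" and v: "v \<in> interior C"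
  shows "M_cone C u v > 0 \<and> M_cone C u v *\<^sub>R v - u \<in> C"
proof -
  define T where "T = {t::real. t \<ge> 0 \<and> t *\<^sub>R v - u \<in> C}"
  have S: "{\<beta>::real. \<beta> > 0 \<and> cone_le C u (\<beta> *\<^sub>R v)} = T"
  proof -
    have "0 \<notin> T" using cone_pointed[OF cc u(1)] u(2) unfolding T_def by auto
    then show ?thesis unfolding T_def cone_le_def by (auto simp: less_le)
  qed
  have clC: "closed C" using cc unfolding closed_cone_def by auto
  have "closed ({0..} \<inter> (\<lambda>t::real. t *\<^sub>R v - u) -` C)"
    by (rule continuous_closed_preimage) (auto intro!: continuous_intros clC)
  moreover have "{0..} \<inter> (\<lambda>t::real. t *\<^sub>R v - u) -` C = T" unfolding T_def by auto
  ultimately have clT: "closed T" by simp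
  have ne: "T \<noteq> {}" using M_exists[OF cc v, of u] unfolding T_def by force
  have bd: "bdd_below T" unfolding T_def by (rule bdd_belowI[of _ 0]) auto
  have inT: "Inf T \<in> T" using closed_contains_Inf[OF ne bd clT] .
  have "0 \<notin> T" using cone_pointed[OF cc u(1)] u(2) unfolding T_def by auto
  then have "Inf T \<noteq> 0" using inT by metis
  moreover have "Inf T \<ge> 0" using inT unfolding T_def by auto
  ultimately have "Inf T > 0" by simp
  moreover have "M_cone C u v = Inf T" unfolding M_cone_def S ..
  ultimately show ?thesis using inT unfolding T_def by auto
qed

lemma M_le:
  assumes "\<beta> > 0" "\<beta> *\<^sub>R v - u \<in> C" shows "M_cone C u v \<le> \<beta>"
  unfolding M_cone_def
  by (rule cInf_lower) (use assms in \<open>auto simp: cone_le_def intro: bdd_belowI[of _ 0]\<close>)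

lemma keyK:
  assumes cc: "closed_cone C" and fi: "f ` interior C \<subseteq> interior C"
    and sh: "subhomogeneous_on C (interior C) f"
    and tk: "typeK_order_preserving_on C (interior C) f"
    and x: "x \<in> interior C" and y: "y \<in> interior C" and b: "b \<ge> 1" and bx: "b *\<^sub>R y - x \<in> C"
  shows "\<exists>\<delta>>0. \<forall>\<epsilon>. 0 < \<epsilon> \<and> \<epsilon> \<le> \<delta> \<longrightarrow> b *\<^sub>R (f y - \<epsilon> *\<^sub>R y) - (f x - \<epsilon> *\<^sub>R x) \<in> C"
proof -
  have hby: "b *\<^sub>R y \<in> interior C" using int_scale[OF cc _ y] b by auto
  obtain \<delta> where d: "\<delta> > 0" "(f (b *\<^sub>R y) - f x) - \<delta> *\<^sub>R (b *\<^sub>R y - x) \<in> C"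
    using tk x hby y bx unfolding typeK_order_preserving_on_def cone_le_def by blast
  have s: "b *\<^sub>R f y - f (b *\<^sub>R y) \<in> C"
    using sh y b hby unfolding subhomogeneous_on_def cone_le_def by blast
  show ?thesis
  proof (intro exI[of _ \<delta>] conjI allI impI)
    fix \<epsilon> :: real assume e: "0 < \<epsilon> \<and> \<epsilon> \<le> \<delta>"
    have r: "(\<delta> - \<epsilon>) *\<^sub>R (b *\<^sub>R y - x) \<in> C" using cone_scale[OF cc _ bx] e by auto
    have "(b *\<^sub>R f y - f (b *\<^sub>R y)) + ((f (b *\<^sub>R y) - f x) - \<delta> *\<^sub>R (b *\<^sub>R y - x))
           + (\<delta> - \<epsilon>) *\<^sub>R (b *\<^sub>R y - x) \<in> C"
      using cone_add[OF cc cone_add[OF cc s d(2)] r] .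
    moreover have "(b *\<^sub>R f y - f (b *\<^sub>R y)) + ((f (b *\<^sub>R y) - f x) - \<delta> *\<^sub>R (b *\<^sub>R y - x))
           + (\<delta> - \<epsilon>) *\<^sub>R (b *\<^sub>R y - x) = b *\<^sub>R (f y - \<epsilon> *\<^sub>R y) - (f x - \<epsilon> *\<^sub>R x)"
      by (simp add: algebra_simps)
    ultimately show "b *\<^sub>R (f y - \<epsilon> *\<^sub>R y) - (f x - \<epsilon> *\<^sub>R x) \<in> C" by metis
  qed (use d in auto)
qed

lemma small_int:
  fixes C :: "'a::real_normed_vector set"
  assumes "z \<in> interior C"
  shows "\<exists>r>0. \<forall>\<epsilon>. 0 < \<epsilon> \<and> \<epsilon> \<le> r \<longrightarrow> z - \<epsilon> *\<^sub>R w \<in> interior C"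
proof -
  obtain r where r: "r > 0" "ball z r \<subseteq> interior C"
    using assms open_interior open_contains_ball by blast
  show ?thesis
  proof (intro exI[of _ "r / (2 * (norm w + 1))"] conjI allI impI)
    show "r / (2 * (norm w + 1)) > 0" using r by (intro pos_aux) auto
    fix \<epsilon> :: real assume e: "0 < \<epsilon> \<and> \<epsilon> \<le> r / (2 * (norm w + 1))"
    have "\<epsilon> * norm w \<le> r / (2 * (norm w + 1)) * norm w"
      using e by (intro mult_right_mono) auto
    also have "\<dots> = r * norm w / (2 * (norm w + 1))" by simp
    also have "\<dots> < r" using r by (intro lt_aux) auto
    finally have "dist z (z - \<epsilon> *\<^sub>R w) < r" using e by (simp add: dist_norm)
    then show "z - \<epsilon> *\<^sub>R w \<in> interior C" using r by auto
  qed
qed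

theorem mainTheorem2:
  fixes C :: "'a::banach set" and f :: "'a \<Rightarrow> 'a"
  assumes "closed_cone C"
    and "interior C \<noteq> {}"
    and "f ` interior C \<subseteq> interior C"
    and "subhomogeneous_on C (interior C) f"
    and "typeK_order_preserving_on C (interior C) f"
  shows "\<forall>x\<in>interior C. \<forall>y\<in>interior C. \<exists>\<epsilon>::real>0.
           f x - \<epsilon> *\<^sub>R x \<in> interior C \<and> f y - \<epsilon> *\<^sub>R y \<in> interior C \<and>
           thompson_dist C (f x - \<epsilon> *\<^sub>R x) (f y - \<epsilon> *\<^sub>R y) \<le> thompson_dist C x y"
proof (intro ballI)
  note cc = assms(1)
  fix x y assume x: "x \<in> interior C" and y: "y \<in> interior C"
  show "\<exists>\<epsilon>::real>0.
           f x - \<epsilon> *\<^sub>R x \<in> interior C \<and> f y - \<epsilon> *\<^sub>R y \<in> interior C \<and>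
           thompson_dist C (f x - \<epsilon> *\<^sub>R x) (f y - \<epsilon> *\<^sub>R y) \<le> thompson_dist C x y"
  proof (cases "0 \<in> interior C")
    case True
    obtain r where r: "r > 0" "ball 0 r \<subseteq> C" using True mem_interior by blast
    have all0: "z = 0" for z :: 'a
    proof -
      define s where "s = r / (2 * (norm z + 1))"
      have s: "s > 0" using r unfolding s_def by (intro pos_aux) auto
      have "norm (s *\<^sub>R z) = r * norm z / (2 * (norm z + 1))"
        using s r unfolding s_def by (simp add: field_simps)
      also have "\<dots> < r" using r by (intro lt_aux) auto
      finally have n: "norm (s *\<^sub>R z) < r" .
      have "s *\<^sub>R z \<in> ball 0 r" using n by (simp add: dist_norm)
      then have a: "s *\<^sub>R z \<in> C" using r(2) by blast
      have "s *\<^sub>R (- z) \<in> ball 0 r" using n by (simp add: dist_norm)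
      then have b: "s *\<^sub>R (- z) \<in> C" using r(2) by blast
      have "(1/s) *\<^sub>R (s *\<^sub>R z) \<in> C" "(1/s) *\<^sub>R (s *\<^sub>R (-z)) \<in> C"
        using cone_scale[OF cc _ a, of "1/s"] cone_scale[OF cc _ b, of "1/s"] s by auto
      moreover have "(1/s) *\<^sub>R (s *\<^sub>R z) = z" "(1/s) *\<^sub>R (s *\<^sub>R (-z)) = -z" using s by auto
      ultimately have "z \<in> C" "- z \<in> C" by metis+
      then show ?thesis using cone_pointed[OF cc] by blast
    qed
    have e2: "f x - x = x" "f y - y = y"
      using all0[of "f x - x"] all0[of x] all0[of "f y - y"] all0[of y] by simp_all
    show ?thesis
    proof (intro exI[of _ "1::real"] conjI)
      show "f x - 1 *\<^sub>R x \<in> interior C" using x e2(1) by simp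
      show "f y - 1 *\<^sub>R y \<in> interior C" using y e2(2) by simp
      show "thompson_dist C (f x - 1 *\<^sub>R x) (f y - 1 *\<^sub>R y) \<le> thompson_dist C x y"
        using e2 by simp
    qed simp
  next
    case False
    have nz: "z \<in> interior C \<Longrightarrow> z \<noteq> 0" for z using False by auto
    have xC: "x \<in> C" and yC: "y \<in> C" using x y interior_subset by auto
    define \<beta> where "\<beta> = M_cone C x y"
    define \<alpha> where "\<alpha> = M_cone C y x"
    have \<beta>: "\<beta> > 0" "\<beta> *\<^sub>R y - x \<in> C" using M_attained[OF cc xC nz[OF x] y] unfolding \<beta>_def by auto
    have \<alpha>: "\<alpha> > 0" "\<alpha> *\<^sub>R x - y \<in> C" using M_attained[OF cc yC nz[OF y] x] unfolding \<alpha>_def by auto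
    have ab: "\<alpha> * \<beta> \<ge> 1"
    proof (rule ccontr)
      assume "\<not> 1 \<le> \<alpha> * \<beta>"
      then have lt: "\<alpha> * \<beta> < 1" by simp
      have "\<beta> *\<^sub>R (\<alpha> *\<^sub>R x - y) + (\<beta> *\<^sub>R y - x) \<in> C"
        using cone_add[OF cc cone_scale[OF cc less_imp_le[OF \<beta>(1)] \<alpha>(2)] \<beta>(2)] .
      moreover have "\<beta> *\<^sub>R (\<alpha> *\<^sub>R x - y) + (\<beta> *\<^sub>R y - x) = (\<alpha> * \<beta> - 1) *\<^sub>R x"
        by (simp add: algebra_simps)
      ultimately have m: "(\<alpha> * \<beta> - 1) *\<^sub>R x \<in> C" by metis
      have c: "0 \<le> 1 / (1 - \<alpha> * \<beta>)" using lt by simp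
      have "(1 / (1 - \<alpha> * \<beta>)) *\<^sub>R ((\<alpha> * \<beta> - 1) *\<^sub>R x) \<in> C"
        using cone_scale[OF cc c m] .
      moreover have "(1 / (1 - \<alpha> * \<beta>)) *\<^sub>R ((\<alpha> * \<beta> - 1) *\<^sub>R x) = - x"
      proof -
        have q: "(1 / (1 - \<alpha> * \<beta>)) * (\<alpha> * \<beta> - 1) = -1" using lt by (simp add: field_simps)
        show ?thesis by (simp only: scaleR_scaleR q) simp
      qed
      ultimately have "- x \<in> C" by metis
      then show False using cone_pointed[OF cc xC] nz[OF x] by blast
    qed
    define b where "b = max \<beta> 1"
    define a where "a = max \<alpha> 1"
    have byx: "b *\<^sub>R y - x \<in> C"
    proof -
      have bb: "b - \<beta> \<ge> 0" unfolding b_def by simp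
      have "(\<beta> *\<^sub>R y - x) + (b - \<beta>) *\<^sub>R y \<in> C"
        using cone_add[OF cc \<beta>(2) cone_scale[OF cc bb yC]] .
      moreover have "(\<beta> *\<^sub>R y - x) + (b - \<beta>) *\<^sub>R y = b *\<^sub>R y - x" by (simp add: algebra_simps)
      ultimately show ?thesis by metis
    qed
    have axy: "a *\<^sub>R x - y \<in> C"
    proof -
      have aa: "a - \<alpha> \<ge> 0" unfolding a_def by simp
      have "(\<alpha> *\<^sub>R x - y) + (a - \<alpha>) *\<^sub>R x \<in> C"
        using cone_add[OF cc \<alpha>(2) cone_scale[OF cc aa xC]] .
      moreover have "(\<alpha> *\<^sub>R x - y) + (a - \<alpha>) *\<^sub>R x = a *\<^sub>R x - y" by (simp add: algebra_simps)
      ultimately show ?thesis by metis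
    qed
    have b1: "1 \<le> b" unfolding b_def by simp
    have a1: "1 \<le> a" unfolding a_def by simp
    obtain d1 where d1: "d1 > 0" "\<forall>\<epsilon>. 0 < \<epsilon> \<and> \<epsilon> \<le> d1 \<longrightarrow> b *\<^sub>R (f y - \<epsilon> *\<^sub>R y) - (f x - \<epsilon> *\<^sub>R x) \<in> C"
      using keyK[OF cc assms(3-5) x y b1 byx] by blast
    obtain d2 where d2: "d2 > 0" "\<forall>\<epsilon>. 0 < \<epsilon> \<and> \<epsilon> \<le> d2 \<longrightarrow> a *\<^sub>R (f x - \<epsilon> *\<^sub>R x) - (f y - \<epsilon> *\<^sub>R y) \<in> C"
      using keyK[OF cc assms(3-5) y x a1 axy] by blast
    have fx: "f x \<in> interior C" and fy: "f y \<in> interior C" using assms(3) x y by auto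
    obtain r1 where r1: "r1 > 0" "\<forall>\<epsilon>. 0 < \<epsilon> \<and> \<epsilon> \<le> r1 \<longrightarrow> f x - \<epsilon> *\<^sub>R x \<in> interior C"
      using small_int[OF fx] by blast
    obtain r2 where r2: "r2 > 0" "\<forall>\<epsilon>. 0 < \<epsilon> \<and> \<epsilon> \<le> r2 \<longrightarrow> f y - \<epsilon> *\<^sub>R y \<in> interior C"
      using small_int[OF fy] by blast
    define \<epsilon> where "\<epsilon> = min (min d1 d2) (min r1 r2)"
    have ep: "0 < \<epsilon>" "\<epsilon> \<le> d1" "\<epsilon> \<le> d2" "\<epsilon> \<le> r1" "\<epsilon> \<le> r2"
      unfolding \<epsilon>_def using d1 d2 r1 r2 by auto
    define u where "u = f x - \<epsilon> *\<^sub>R x"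
    define w where "w = f y - \<epsilon> *\<^sub>R y"
    have u: "u \<in> interior C" using r1(2) ep unfolding u_def by blast
    have w: "w \<in> interior C" using r2(2) ep unfolding w_def by blast
    have uC: "u \<in> C" and wC: "w \<in> C" using u w interior_subset by auto
    have "b *\<^sub>R w - u \<in> C" using d1(2) ep unfolding u_def w_def by blast
    then have M1: "M_cone C u w \<le> b" using M_le[of b w u C] b1 by linarith
    have "a *\<^sub>R u - w \<in> C" using d2(2) ep unfolding u_def w_def by blast
    then have M2: "M_cone C w u \<le> a" using M_le[of a u w C] a1 by linarith
    have P1: "M_cone C u w > 0" using M_attained[OF cc uC nz[OF u] w] by auto
    have P2: "M_cone C w u > 0" using M_attained[OF cc wC nz[OF w] u] by auto
    have L1: "ln (M_cone C u w) \<le> ln b" using M1 P1 by simp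
    have L2: "ln (M_cone C w u) \<le> ln a" using M2 P2 by simp
    have lm: "ln (\<alpha> * \<beta>) = ln \<alpha> + ln \<beta>" using \<alpha>(1) \<beta>(1) by (simp add: ln_mult)
    have "ln (\<alpha> * \<beta>) \<ge> 0" using ab by simp
    then have lnab: "ln \<alpha> + ln \<beta> \<ge> 0" using lm by linarith
    have "ln b \<le> max (ln \<beta>) (ln \<alpha>)"
    proof (cases "\<beta> \<le> 1")
      case True
      then have "b = 1" unfolding b_def by simp
      then show ?thesis using lnab by (simp add: le_max_iff_disj, linarith)
    next
      case False
      then have "b = \<beta>" unfolding b_def by simp
      then show ?thesis by simp
    qed
    moreover have "ln a \<le> max (ln \<beta>) (ln \<alpha>)"
    proof (cases "\<alpha> \<le> 1")
      case True
      then have "a = 1" unfolding a_def by simp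
      then show ?thesis using lnab by (simp add: le_max_iff_disj, linarith)
    next
      case False
      then have "a = \<alpha>" unfolding a_def by simp
      then show ?thesis by simp
    qed
    ultimately have mx: "max (ln (M_cone C u w)) (ln (M_cone C w u)) \<le> max (ln \<beta>) (ln \<alpha>)"
      using L1 L2 by (intro max.boundedI) linarith+
    have t1: "thompson_dist C u w = max (ln (M_cone C u w)) (ln (M_cone C w u))"
      unfolding thompson_dist_def ..
    have t2: "thompson_dist C x y = max (ln \<beta>) (ln \<alpha>)"
      unfolding thompson_dist_def \<alpha>_def \<beta>_def ..
    have "thompson_dist C u w \<le> thompson_dist C x y" unfolding t1 t2 by (rule mx)
    then have fin: "thompson_dist C (f x - \<epsilon> *\<^sub>R x) (f y - \<epsilon> *\<^sub>R y) \<le> thompson_dist C x y"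
      unfolding u_def w_def .
    have u': "f x - \<epsilon> *\<^sub>R x \<in> interior C" using u unfolding u_def .
    have w': "f y - \<epsilon> *\<^sub>R y \<in> interior C" using w unfolding w_def .
    show ?thesis
      by (rule exI[of _ \<epsilon>], intro conjI, rule ep(1), rule u', rule w', rule fin)
  qed
qed

end
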